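(* Let $R$ be a ring and $M$ a projective left $R$-module which is 2-primal. Then $\mathcal N_s(M)=\langle E_M(0)\rangle=\beta_{co}(M)=\beta(M)$. In particular the zero submodule of $M$ satisfies both the complete radical formula and the radical formula.
   Context: Rings are associative with identity; modules are unital left modules. A submodule $P$ of $M$ is prime if $RM\not\subseteq P$ and for every ideal $A$ of $R$ and submodule $K$ with $AK\subseteq P$, $K\subseteq P$ or $AM\subseteq P$; completely prime if $RM\not\subseteq P$ and $rm\in P$ implies $m\in P$ or $rM\subseteq P$. $\beta(M)$ (resp. $\beta_{co}(M)$) is the intersection of all prime (resp. completely prime) submodules ($=M$ if none). $M$ is 2-primal if $\beta(M)=\beta_{co}(M)$. $E_M(0)=\{rm: r\in R,m\in M, r^km=0\text{ for some }k\in\mathbb N\}$, $\langle E_M(0)\rangle$ the submodule generated. A submodule $N$ satisfies the radical formula (resp. complete radical formula) if $\langle E_M(N)\rangle$ equals the intersection of all prime (resp. completely prime) submodules containing $N$. $\mathcal N_s(M)$ is the set of strongly nilpotent elements: $m=\sum_{i=1}^r a_im_i$ ($a_i\in R,m_i\in M$) such that for each $i$ and every sequence $a_{i1}=a_i$, $a_{i,n+1}\in a_{in}Ra_{in}$, there is $k$ with $a_{ik}Rm_i=0$. *)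

theory Defs
  imports Main
begin

text \<open>A left module is the whole type 'm (an abelian group) with a scalar
action s :: 'r => 'm => 'm satisfying the unital left module axioms.\<close>

definition lmodule :: "('r::{ring,monoid_mult} \<Rightarrow> 'm::ab_group_add \<Rightarrow> 'm) \<Rightarrow> bool" where
  "lmodule s \<longleftrightarrow>
     (\<forall>a x y. s a (x + y) = s a x + s a y) \<and>
     (\<forall>a b x. s (a + b) x = s a x + s b x) \<and>
     (\<forall>a b x. s (a * b) x = s a (s b x)) \<and>
     (\<forall>x. s 1 x = x)"

definition submod :: "('r::{ring,monoid_mult} \<Rightarrow> 'm::ab_group_add \<Rightarrow> 'm) \<Rightarrow> 'm set \<Rightarrow> bool" where
  "submod s N \<longleftrightarrow> 0 \<in> N \<and> (\<forall>x\<in>N. \<forall>y\<in>N. x + y \<in> N) \<and> (\<forall>x\<in>N. - x \<in> N)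
     \<and> (\<forall>a. \<forall>x\<in>N. s a x \<in> N)"

definition gen_submod :: "('r::{ring,monoid_mult} \<Rightarrow> 'm::ab_group_add \<Rightarrow> 'm) \<Rightarrow> 'm set \<Rightarrow> 'm set" where
  "gen_submod s S = \<Inter> {N. submod s N \<and> S \<subseteq> N}"

definition ring_ideal :: "'r::{ring,monoid_mult} set \<Rightarrow> bool" where
  "ring_ideal A \<longleftrightarrow> 0 \<in> A \<and> (\<forall>x\<in>A. \<forall>y\<in>A. x + y \<in> A) \<and> (\<forall>x\<in>A. - x \<in> A)
     \<and> (\<forall>r. \<forall>x\<in>A. r * x \<in> A \<and> x * r \<in> A)"

definition prod_sm :: "('r::{ring,monoid_mult} \<Rightarrow> 'm::ab_group_add \<Rightarrow> 'm) \<Rightarrow> 'r set \<Rightarrow> 'm set \<Rightarrow> 'm set" where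
  "prod_sm s A K = gen_submod s {s a k | a k. a \<in> A \<and> k \<in> K}"

definition prime_submod :: "('r::{ring,monoid_mult} \<Rightarrow> 'm::ab_group_add \<Rightarrow> 'm) \<Rightarrow> 'm set \<Rightarrow> bool" where
  "prime_submod s P \<longleftrightarrow> submod s P \<and> \<not> prod_sm s UNIV UNIV \<subseteq> P \<and>
     (\<forall>A K. ring_ideal A \<and> submod s K \<and> prod_sm s A K \<subseteq> P \<longrightarrow>
        K \<subseteq> P \<or> prod_sm s A UNIV \<subseteq> P)"

definition cprime_submod :: "('r::{ring,monoid_mult} \<Rightarrow> 'm::ab_group_add \<Rightarrow> 'm) \<Rightarrow> 'm set \<Rightarrow> bool" where
  "cprime_submod s P \<longleftrightarrow> submod s P \<and> \<not> prod_sm s UNIV UNIV \<subseteq> P \<and>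
     (\<forall>r m. s r m \<in> P \<longrightarrow> m \<in> P \<or> (\<forall>x. s r x \<in> P))"

text \<open>Intersections (the intersection of the empty family is UNIV = M).\<close>
definition beta :: "('r::{ring,monoid_mult} \<Rightarrow> 'm::ab_group_add \<Rightarrow> 'm) \<Rightarrow> 'm set" where
  "beta s = \<Inter> {P. prime_submod s P}"

definition beta_co :: "('r::{ring,monoid_mult} \<Rightarrow> 'm::ab_group_add \<Rightarrow> 'm) \<Rightarrow> 'm set" where
  "beta_co s = \<Inter> {P. cprime_submod s P}"

definition two_primal :: "('r::{ring,monoid_mult} \<Rightarrow> 'm::ab_group_add \<Rightarrow> 'm) \<Rightarrow> bool" where
  "two_primal s \<longleftrightarrow> beta s = beta_co s"

definition E0 :: "('r::{ring,monoid_mult} \<Rightarrow> 'm::ab_group_add \<Rightarrow> 'm) \<Rightarrow> 'm set" where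
  "E0 s = {s r m | r m. \<exists>k::nat. s (r ^ k) m = 0}"

definition sn_pair :: "('r::{ring,monoid_mult} \<Rightarrow> 'm::ab_group_add \<Rightarrow> 'm) \<Rightarrow> 'r \<Rightarrow> 'm \<Rightarrow> bool" where
  "sn_pair s a m \<longleftrightarrow>
     (\<forall>f :: nat \<Rightarrow> 'r. f 0 = a \<and> (\<forall>n. \<exists>r. f (Suc n) = f n * r * f n) \<longrightarrow>
        (\<exists>k. \<forall>r. s (f k * r) m = 0))"

definition Ns :: "('r::{ring,monoid_mult} \<Rightarrow> 'm::ab_group_add \<Rightarrow> 'm) \<Rightarrow> 'm set" where
  "Ns s = {x. \<exists>ps :: ('r \<times> 'm) list. x = sum_list (map (\<lambda>(a, m). s a m) ps) \<and>
                 (\<forall>(a, m) \<in> set ps. sn_pair s a m)}"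

text \<open>The free module R^(M) on the underlying set of M is modelled by the
finitely supported functions 'm => 'r with pointwise addition and left multiplication;
pi is the canonical epimorphism R^(M) -> M.  M is projective iff pi splits, i.e. there is a
module homomorphism sigma : M -> R^(M) with pi o sigma = id (M is a direct summand of
a free module).\<close>
definition fin_supp :: "('m \<Rightarrow> 'r::zero) \<Rightarrow> bool" where
  "fin_supp f \<longleftrightarrow> finite {x. f x \<noteq> 0}"

definition free_proj :: "('r::{ring,monoid_mult} \<Rightarrow> 'm::ab_group_add \<Rightarrow> 'm) \<Rightarrow> ('m \<Rightarrow> 'r) \<Rightarrow> 'm" where
  "free_proj s f = (\<Sum>x\<in>{x. f x \<noteq> 0}. s (f x) x)"

definition projective :: "('r::{ring,monoid_mult} \<Rightarrow> 'm::ab_group_add \<Rightarrow> 'm) \<Rightarrow> bool" where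
  "projective s \<longleftrightarrow> (\<exists>\<sigma> :: 'm \<Rightarrow> ('m \<Rightarrow> 'r).
     (\<forall>x. fin_supp (\<sigma> x)) \<and>
     (\<forall>x y. \<sigma> (x + y) = (\<lambda>z. \<sigma> x z + \<sigma> y z)) \<and>
     (\<forall>r x. \<sigma> (s r x) = (\<lambda>z. r * \<sigma> x z)) \<and>
     (\<forall>x. free_proj s (\<sigma> x) = x))"

end

theory Submission
  imports Defs
begin

lemma gen_submod_submod: "submod s (gen_submod s S)"
  unfolding gen_submod_def submod_def by blast

lemma gen_submod_sup: "S \<subseteq> gen_submod s S"
  unfolding gen_submod_def by blast

lemma gen_submod_least: "submod s N \<Longrightarrow> S \<subseteq> N \<Longrightarrow> gen_submod s S \<subseteq> N"
  unfolding gen_submod_def by blast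

lemma lm_add: "lmodule s \<Longrightarrow> s (a + b) x = s a x + s b x"
  unfolding lmodule_def by blast

lemma lm_addr: "lmodule s \<Longrightarrow> s a (x + y) = s a x + s a y"
  unfolding lmodule_def by blast

lemma lm_mult: "lmodule s \<Longrightarrow> s (a * b) x = s a (s b x)"
  unfolding lmodule_def by blast

lemma lm_one: "lmodule s \<Longrightarrow> s 1 x = x"
  unfolding lmodule_def by blast

lemma lm_zero:
  assumes "lmodule s" shows "s 0 x = 0"
proof -
  have "s (0+0) x = s 0 x + s 0 x" using lm_add[OF assms] by blast
  then show ?thesis by simp
qed

lemma lm_neg:
  assumes "lmodule s" shows "s (-a) x = - s a x"
proof -
  have "s (a + -a) x = s a x + s (-a) x" using lm_add[OF assms] by blast
  then have "s a x + s (-a) x = 0" using lm_zero[OF assms] by simp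
  then show ?thesis by (simp add: eq_neg_iff_add_eq_0 add.commute)
qed

lemma submod_sum_list: "submod s P \<Longrightarrow> (\<forall>y\<in>set xs. y \<in> P) \<Longrightarrow> sum_list xs \<in> P"
  by (induction xs) (auto simp: submod_def)

lemma mseq:
  fixes f :: "nat \<Rightarrow> 'r::{ring,monoid_mult}"
  assumes rec: "\<forall>n. \<exists>r. f (Suc n) = f n * r * f n"
  shows "i \<le> n \<Longrightarrow> \<exists>a b. f n = f i * a \<and> f n = b * f i"
proof (induction n rule: dec_induct)
  case base
  then show ?case by (metis mult_1_right mult_1_left)
next
  case (step n)
  then obtain a b where ab: "f n = f i * a" "f n = b * f i" by blast
  obtain r where r: "f (Suc n) = f n * r * f n" using rec by blast
  have "f (Suc n) = f i * (a * r * f n)" using r ab(1) by (simp add: mult.assoc)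
  moreover have "f (Suc n) = (f n * r * b) * f i" using r ab(2) by (simp add: mult.assoc)
  ultimately show ?case by blast
qed

lemma mseq2:
  fixes f :: "nat \<Rightarrow> 'r::{ring,monoid_mult}"
  assumes rec: "\<forall>n. \<exists>r. f (Suc n) = f n * r * f n"
  shows "\<exists>u l. f l = f i * u * f j"
proof -
  define n where "n = max i j"
  obtain a b where ab: "f n = f i * a" using mseq[OF rec, of i n] n_def by auto
  obtain c d where cd: "f n = d * f j" using mseq[OF rec, of j n] n_def by auto
  obtain r where r: "f (Suc n) = f n * r * f n" using rec by blast
  have "f (Suc n) = f i * (a * r * d) * f j"
    using r ab cd by (metis mult.assoc)
  then show ?thesis by blast
qed

lemma ri_0: "ring_ideal A \<Longrightarrow> 0 \<in> A" unfolding ring_ideal_def by blast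
lemma ri_add: "ring_ideal A \<Longrightarrow> x \<in> A \<Longrightarrow> y \<in> A \<Longrightarrow> x + y \<in> A" unfolding ring_ideal_def by blast
lemma ri_neg: "ring_ideal A \<Longrightarrow> x \<in> A \<Longrightarrow> - x \<in> A" unfolding ring_ideal_def by blast
lemma ri_lmul: "ring_ideal A \<Longrightarrow> x \<in> A \<Longrightarrow> r * x \<in> A" unfolding ring_ideal_def by blast
lemma ri_rmul: "ring_ideal A \<Longrightarrow> x \<in> A \<Longrightarrow> x * r \<in> A" unfolding ring_ideal_def by blast
lemma ring_idealI:
  assumes "0 \<in> A" "\<And>x y. x \<in> A \<Longrightarrow> y \<in> A \<Longrightarrow> x + y \<in> A" "\<And>x. x \<in> A \<Longrightarrow> - x \<in> A"
    "\<And>r x. x \<in> A \<Longrightarrow> r * x \<in> A" "\<And>r x. x \<in> A \<Longrightarrow> x * r \<in> A"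
  shows "ring_ideal A"
  unfolding ring_ideal_def using assms by blast

lemma exists_prime_ideal:
  fixes f :: "nat \<Rightarrow> 'r::{ring,monoid_mult}"
  assumes rec: "\<forall>n. \<exists>r. f (Suc n) = f n * r * f n" and nz: "\<forall>k. f k \<noteq> 0"
  shows "\<exists>p. ring_ideal p \<and> (\<forall>k. f k \<notin> p) \<and> (\<forall>r c. (\<forall>v. r*v*c \<in> p) \<longrightarrow> r \<in> p \<or> c \<in> p)"
proof -
  define F where "F = {I. ring_ideal I \<and> (\<forall>k. f k \<notin> I)}"
  have "ring_ideal {0::'r}" by (rule ring_idealI) auto
  then have "{0} \<in> F" using nz by (auto simp: F_def)
  then have Fne: "F \<noteq> {}" by blast
  have ch: "\<Union>C \<in> F" if Cne: "C \<noteq> {}" and chn: "subset.chain F C" for C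
  proof -
    have CF: "C \<subseteq> F" and cmp: "\<And>X Y. X \<in> C \<Longrightarrow> Y \<in> C \<Longrightarrow> X \<subseteq> Y \<or> Y \<subseteq> X"
      using chn unfolding subset.chain_def by blast+
    have ids: "\<And>X. X \<in> C \<Longrightarrow> ring_ideal X" using CF unfolding F_def by blast
    have "ring_ideal (\<Union>C)"
    proof (rule ring_idealI)
      obtain X where "X \<in> C" using Cne by blast
      then show "0 \<in> \<Union>C" using ids ri_0 by blast
    next
      fix x y assume "x \<in> \<Union>C" "y \<in> \<Union>C"
      then obtain X Y where XY: "x \<in> X" "X \<in> C" "y \<in> Y" "Y \<in> C" by blast
      show "x + y \<in> \<Union>C"
      proof (cases "X \<subseteq> Y")
        case True
        then show ?thesis using XY ids[of Y] ri_add[of Y x y] by blast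
      next
        case False
        then have "Y \<subseteq> X" using cmp XY by blast
        then show ?thesis using XY ids[of X] ri_add[of X x y] by blast
      qed
    next
      fix x assume "x \<in> \<Union>C"
      then obtain X where "x \<in> X" "X \<in> C" by blast
      then show "- x \<in> \<Union>C" using ids ri_neg by blast
    next
      fix r x assume "x \<in> \<Union>C"
      then obtain X where "x \<in> X" "X \<in> C" by blast
      then show "r * x \<in> \<Union>C" using ids ri_lmul by blast
    next
      fix r x assume "x \<in> \<Union>C"
      then obtain X where "x \<in> X" "X \<in> C" by blast
      then show "x * r \<in> \<Union>C" using ids ri_rmul by blast
    qed
    moreover have "\<forall>k. f k \<notin> \<Union>C" using CF unfolding F_def by blast
    ultimately show ?thesis unfolding F_def by blast
  qed
  obtain p where pF: "p \<in> F" and pmax: "\<forall>X\<in>F. p \<subseteq> X \<longrightarrow> X = p"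
    using subset_Zorn_nonempty[OF Fne ch] by blast
  have pid: "ring_ideal p" and pS: "\<forall>k. f k \<notin> p" using pF unfolding F_def by auto
  have prime: "r \<in> p \<or> c \<in> p" if h: "\<forall>v. r*v*c \<in> p" for r c
  proof (rule ccontr)
    assume nrc: "\<not> (r \<in> p \<or> c \<in> p)"
    define J where "J = {t. \<forall>v. t*v*c \<in> p}"
    have Jid: "ring_ideal J"
    proof (rule ring_idealI)
      show "0 \<in> J" unfolding J_def using ri_0[OF pid] by simp
      show "x + y \<in> J" if "x \<in> J" "y \<in> J" for x y
        using that ri_add[OF pid] unfolding J_def by (simp add: distrib_right)
      show "- x \<in> J" if "x \<in> J" for x
        using that ri_neg[OF pid] unfolding J_def by simp
      show "r * x \<in> J" if "x \<in> J" for r x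
      proof -
        have "\<forall>v. r * (x * v * c) \<in> p" using that ri_lmul[OF pid] unfolding J_def by blast
        then show ?thesis unfolding J_def by (simp add: mult.assoc)
      qed
      show "x * r \<in> J" if "x \<in> J" for r x
      proof -
        have "\<forall>v. x * (r * v) * c \<in> p" using that unfolding J_def by blast
        then show ?thesis unfolding J_def by (simp add: mult.assoc)
      qed
    qed
    have "p \<subseteq> J"
    proof
      fix t assume "t \<in> p"
      then have "\<forall>v. t * (v * c) \<in> p" using ri_rmul[OF pid] by blast
      then show "t \<in> J" unfolding J_def by (simp add: mult.assoc)
    qed
    moreover have "J \<noteq> p" using h nrc unfolding J_def by blast
    ultimately have "J \<notin> F" using pmax by blast
    then obtain i where fi: "f i \<in> J" using Jid unfolding F_def by blast
    define K where "K = {t. \<forall>v. f i*v*t \<in> p}"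
    have Kid: "ring_ideal K"
    proof (rule ring_idealI)
      show "0 \<in> K" unfolding K_def using ri_0[OF pid] by simp
      show "x + y \<in> K" if "x \<in> K" "y \<in> K" for x y
        using that ri_add[OF pid] unfolding K_def by (simp add: distrib_left)
      show "- x \<in> K" if "x \<in> K" for x
        using that ri_neg[OF pid] unfolding K_def by simp
      show "r * x \<in> K" if "x \<in> K" for r x
      proof -
        have "\<forall>v. f i * (v * r) * x \<in> p" using that unfolding K_def by blast
        then show ?thesis unfolding K_def by (simp add: mult.assoc)
      qed
      show "x * r \<in> K" if "x \<in> K" for r x
      proof -
        have "\<forall>v. (f i * v * x) * r \<in> p" using that ri_rmul[OF pid] unfolding K_def by blast
        then show ?thesis unfolding K_def by (simp add: mult.assoc)
      qed
    qed
    have "p \<subseteq> K"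
    proof
      fix t assume "t \<in> p"
      then show "t \<in> K" unfolding K_def using ri_lmul[OF pid] by blast
    qed
    moreover have "c \<in> K" using fi unfolding J_def K_def by blast
    then have "K \<noteq> p" using nrc by blast
    ultimately have "K \<notin> F" using pmax by blast
    then obtain j where fj: "f j \<in> K" using Kid unfolding F_def by blast
    obtain u l where ul: "f l = f i * u * f j" using mseq2[OF rec] by blast
    have "f i * u * f j \<in> p" using fj unfolding K_def by blast
    then show False using ul pS by metis
  qed
  show ?thesis using pid pS prime by blast
qed

lemma Ns_sum:
  assumes "finite A" "\<forall>z\<in>A. sn_pair s (g z) z"
  shows "(\<Sum>z\<in>A. s (g z) z) \<in> Ns s"
proof -
  obtain xs where xs: "set xs = A" "distinct xs" using finite_distinct_list[OF assms(1)] by blast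
  define ps where "ps = map (\<lambda>z. (g z, z)) xs"
  have "sum_list (map (\<lambda>(a, m). s a m) ps) = sum_list (map (\<lambda>z. s (g z) z) xs)"
    unfolding ps_def by (induction xs) auto
  also have "\<dots> = (\<Sum>z\<in>A. s (g z) z)" using xs sum_list_distinct_conv_sum_set by metis
  finally have "(\<Sum>z\<in>A. s (g z) z) = sum_list (map (\<lambda>(a, m). s a m) ps)" by simp
  moreover have "\<forall>(a, m) \<in> set ps. sn_pair s a m" using assms(2) xs ps_def by auto
  ultimately show ?thesis unfolding Ns_def by blast
qed

lemma beta_sub_Ns:
  fixes s :: "'r::{ring,monoid_mult} \<Rightarrow> 'm::ab_group_add \<Rightarrow> 'm"
  assumes lm: "lmodule s" and pr: "projective s"
  shows "beta s \<subseteq> Ns s"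
proof
  fix x assume xb: "x \<in> beta s"
  obtain \<sigma> :: "'m \<Rightarrow> 'm \<Rightarrow> 'r" where fs: "\<forall>x. fin_supp (\<sigma> x)"
    and add: "\<forall>x y. \<sigma> (x + y) = (\<lambda>z. \<sigma> x z + \<sigma> y z)"
    and sc: "\<forall>r x. \<sigma> (s r x) = (\<lambda>z. r * \<sigma> x z)" and fp: "\<forall>x. free_proj s (\<sigma> x) = x"
    using pr unfolding projective_def by blast
  have s0: "\<sigma> 0 z = 0" for z
  proof -
    have "\<sigma> (0 + 0) z = \<sigma> 0 z + \<sigma> 0 z" using fun_cong[OF add[rule_format, of 0 0], of z] by blast
    then show ?thesis by simp
  qed
  have sneg: "\<sigma> (- y) z = - \<sigma> y z" for y z
  proof -
    have "\<sigma> (y + - y) z = \<sigma> y z + \<sigma> (-y) z" using fun_cong[OF add[rule_format, of y "-y"], of z] by blast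
    then have "\<sigma> y z + \<sigma> (-y) z = 0" using s0 by simp
    then show ?thesis by (simp add: eq_neg_iff_add_eq_0 add.commute)
  qed
  have sn: "sn_pair s (\<sigma> x z) z" for z
    unfolding sn_pair_def
  proof (intro allI impI)
    fix f :: "nat \<Rightarrow> 'r" assume f: "f 0 = \<sigma> x z \<and> (\<forall>n. \<exists>r. f (Suc n) = f n * r * f n)"
    show "\<exists>k. \<forall>r. s (f k * r) z = 0"
    proof (rule ccontr)
      assume nex: "\<not> (\<exists>k. \<forall>r. s (f k * r) z = 0)"
      have nz: "\<forall>k. f k \<noteq> 0"
      proof
        fix k show "f k \<noteq> 0"
        proof
          assume "f k = 0"
          then have "\<forall>r. s (f k * r) z = 0" using lm_zero[OF lm] by simp
          then show False using nex by blast
        qed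
      qed
      obtain p where pid: "ring_ideal p" and pS: "\<forall>k. f k \<notin> p"
        and ppr: "\<forall>r c. (\<forall>v. r*v*c \<in> p) \<longrightarrow> r \<in> p \<or> c \<in> p"
        using exists_prime_ideal[of f] f nz by blast
      have pmul: "\<And>x y. x \<in> p \<Longrightarrow> x * y \<in> p" "\<And>x y. y \<in> p \<Longrightarrow> x * y \<in> p"
        using ri_rmul[OF pid] ri_lmul[OF pid] by auto
      have padd: "\<And>x y. x \<in> p \<Longrightarrow> y \<in> p \<Longrightarrow> x + y \<in> p" and pneg: "\<And>x. x \<in> p \<Longrightarrow> - x \<in> p"
        and p0: "0 \<in> p"
        using ri_add[OF pid] ri_neg[OF pid] ri_0[OF pid] by auto
      define Q where "Q = {m. \<forall>w. \<sigma> m w \<in> p}"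
      have Qs: "submod s Q"
        unfolding submod_def
      proof (intro conjI ballI allI)
        show "0 \<in> Q" unfolding Q_def using s0 p0 by simp
        show "y + y' \<in> Q" if "y \<in> Q" "y' \<in> Q" for y y'
          using that padd unfolding Q_def by (simp add: add)
        show "- y \<in> Q" if "y \<in> Q" for y
          using that pneg unfolding Q_def by (simp add: sneg)
        show "s a y \<in> Q" if "y \<in> Q" for a y
          using that pmul unfolding Q_def by (simp add: sc)
      qed
      have "f 0 = \<sigma> x z" using f by blast
      then have "\<sigma> x z \<notin> p" using pS by metis
      then have xQ: "x \<notin> Q" unfolding Q_def by blast
      have "prime_submod s Q"
        unfolding prime_submod_def
      proof (intro conjI allI impI)
        show "submod s Q" by (rule Qs)
        have "s 1 x \<in> {s a k |a k. a \<in> (UNIV::'r set) \<and> k \<in> (UNIV::'m set)}" by blast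
        then have "x \<in> {s a k |a k. a \<in> (UNIV::'r set) \<and> k \<in> (UNIV::'m set)}" using lm_one[OF lm] by simp
        then have "x \<in> prod_sm s UNIV UNIV"
          unfolding prod_sm_def by (rule subsetD[OF gen_submod_sup])
        then show "\<not> prod_sm s UNIV UNIV \<subseteq> Q" using xQ by blast
      next
        fix A K assume h: "ring_ideal A \<and> submod s K \<and> prod_sm s A K \<subseteq> Q"
        show "K \<subseteq> Q \<or> prod_sm s A UNIV \<subseteq> Q"
        proof (cases "K \<subseteq> Q")
          case False
          then obtain m where mK: "m \<in> K" and mQ: "m \<notin> Q" by blast
          then obtain w0 where c: "\<sigma> m w0 \<notin> p" unfolding Q_def by blast
          have Ap: "a \<in> p" if aA: "a \<in> A" for a
          proof -
            have "\<forall>v. a * v * \<sigma> m w0 \<in> p"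
            proof
              fix v
              have "a * v \<in> A" using aA h ri_rmul by blast
              then have "s (a * v) m \<in> {s a k |a k. a \<in> A \<and> k \<in> K}" using mK by blast
              then have "s (a * v) m \<in> prod_sm s A K"
                unfolding prod_sm_def by (rule subsetD[OF gen_submod_sup])
              then have "s (a * v) m \<in> Q" using h by blast
              then show "a * v * \<sigma> m w0 \<in> p" unfolding Q_def by (simp add: sc)
            qed
            then show ?thesis using ppr c by blast
          qed
          have "prod_sm s A UNIV \<subseteq> Q"
            unfolding prod_sm_def
          proof (rule gen_submod_least[OF Qs], rule subsetI)
            fix y assume "y \<in> {s a k |a k. a \<in> A \<and> k \<in> (UNIV::'m set)}"
            then obtain a k where y: "y = s a k" "a \<in> A" by blast
            then have "a \<in> p" using Ap by blast
            then show "y \<in> Q" unfolding Q_def y(1) using pmul by (simp add: sc)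
          qed
          then show ?thesis by blast
        qed simp
      qed
      then have "x \<in> Q" using xb unfolding beta_def by blast
      then show False using xQ by blast
    qed
  qed
  have fin: "finite {z. \<sigma> x z \<noteq> 0}" using fs unfolding fin_supp_def by blast
  have "x = (\<Sum>z\<in>{z. \<sigma> x z \<noteq> 0}. s (\<sigma> x z) z)" using fp unfolding free_proj_def by metis
  then show "x \<in> Ns s" using Ns_sum[OF fin, of s "\<sigma> x"] sn by simp
qed

lemma Ns_sub_E0:
  assumes lm: "lmodule s"
  shows "Ns s \<subseteq> gen_submod s (E0 s)"
proof
  fix x assume "x \<in> Ns s"
  then obtain ps where x: "x = sum_list (map (\<lambda>(a, m). s a m) ps)"
    and sp: "\<forall>(a, m) \<in> set ps. sn_pair s a m" unfolding Ns_def by blast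
  have "s a m \<in> E0 s" if sa: "sn_pair s a m" for a m
  proof -
    define f where "f = (\<lambda>n::nat. a ^ (2 ^ n))"
    have "f 0 = a" by (simp add: f_def)
    moreover have "\<forall>n. \<exists>r. f (Suc n) = f n * r * f n"
    proof
      fix n
      have "f (Suc n) = f n * 1 * f n" unfolding f_def by (simp add: power_add[symmetric] mult_2)
      then show "\<exists>r. f (Suc n) = f n * r * f n" by blast
    qed
    ultimately obtain k where "\<forall>r. s (f k * r) m = 0" using sa unfolding sn_pair_def by blast
    then have "s (a ^ (2 ^ k)) m = 0" unfolding f_def by (metis mult_1_right)
    then show ?thesis unfolding E0_def by blast
  qed
  then have "\<forall>y\<in>set (map (\<lambda>(a, m). s a m) ps). y \<in> gen_submod s (E0 s)"
    using sp gen_submod_sup by fastforce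
  then show "x \<in> gen_submod s (E0 s)" using x submod_sum_list gen_submod_submod by metis
qed

lemma E0_sub_beta_co:
  assumes lm: "lmodule s"
  shows "gen_submod s (E0 s) \<subseteq> beta_co s"
proof -
  have "gen_submod s (E0 s) \<subseteq> P" if cp: "cprime_submod s P" for P
  proof (rule gen_submod_least)
    have P: "submod s P" using cp unfolding cprime_submod_def by blast
    show "submod s P" by (rule P)
    have key: "\<forall>m. s (r ^ k) m \<in> P \<longrightarrow> s r m \<in> P" for r k
    proof (induction k)
      case 0
      then show ?case using P lm_one[OF lm] by (simp add: submod_def)
    next
      case (Suc k)
      show ?case
      proof (intro allI impI)
        fix m assume "s (r ^ Suc k) m \<in> P"
        then have "s r (s (r ^ k) m) \<in> P" using lm_mult[OF lm] by (simp add: power_Suc)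
        then have "s (r ^ k) m \<in> P \<or> (\<forall>x. s r x \<in> P)" using cp unfolding cprime_submod_def by blast
        then show "s r m \<in> P" using Suc by blast
      qed
    qed
    show "E0 s \<subseteq> P"
    proof
      fix y assume "y \<in> E0 s"
      then obtain r m k where "y = s r m" "s (r ^ k) m = 0" unfolding E0_def by blast
      then show "y \<in> P" using key P unfolding submod_def by metis
    qed
  qed
  then show ?thesis unfolding beta_co_def by blast
qed

theorem theorem4p10:
  fixes s :: "'r::{ring,monoid_mult} \<Rightarrow> 'm::ab_group_add \<Rightarrow> 'm"
  assumes "lmodule s" and "projective s" and "two_primal s"
  shows "Ns s = gen_submod s (E0 s) \<and> gen_submod s (E0 s) = beta_co s \<and> beta_co s = beta s
     \<and> gen_submod s (E0 s) = \<Inter> {P. cprime_submod s P \<and> {0} \<subseteq> P}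
     \<and> gen_submod s (E0 s) = \<Inter> {P. prime_submod s P \<and> {0} \<subseteq> P}"
proof -
  have bb: "beta_co s = beta s" using assms(3) unfolding two_primal_def by metis
  have 1: "Ns s \<subseteq> gen_submod s (E0 s)" by (rule Ns_sub_E0[OF assms(1)])
  have 2: "gen_submod s (E0 s) \<subseteq> beta_co s" by (rule E0_sub_beta_co[OF assms(1)])
  have 3: "beta s \<subseteq> Ns s" by (rule beta_sub_Ns[OF assms(1,2)])
  have e: "Ns s = gen_submod s (E0 s)" "gen_submod s (E0 s) = beta_co s"
    using 1 2 3 bb by auto
  have c: "\<Inter> {P. cprime_submod s P \<and> {0} \<subseteq> P} = beta_co s"
  proof -
    have "\<And>P. cprime_submod s P \<Longrightarrow> 0 \<in> P" unfolding cprime_submod_def submod_def by blast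
    then have "{P. cprime_submod s P \<and> {0} \<subseteq> P} = {P. cprime_submod s P}" by blast
    then show ?thesis unfolding beta_co_def by simp
  qed
  have p: "\<Inter> {P. prime_submod s P \<and> {0} \<subseteq> P} = beta s"
  proof -
    have "\<And>P. prime_submod s P \<Longrightarrow> 0 \<in> P" unfolding prime_submod_def submod_def by blast
    then have "{P. prime_submod s P \<and> {0} \<subseteq> P} = {P. prime_submod s P}" by blast
    then show ?thesis unfolding beta_def by simp
  qed
  show ?thesis using e bb c p by simp
qed

end
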